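(* Let $\sigma$ be a fixed permutation of $[k]$. The probability that a uniformly random involution of $[n]$ contains $\sigma$ as a subsequence is $1/k!+o(1)$ as $n\to\infty$.
   Context: $[n]=\{1,\dots,n\}$. An involution of $[n]$ is a permutation $\phi$ with $\phi^2$ the identity. A permutation $\phi$ of $[n]$ ($n\ge k$) contains the permutation $\sigma$ of $[k]$ as a subsequence if, in the word $\phi(1)\phi(2)\cdots\phi(n)$, the letters $1,\dots,k$ appear in the order $\sigma(1),\sigma(2),\dots,\sigma(k)$. *)

theory Defs
  imports Complex_Main "HOL-Combinatorics.Permutations"
begin

definition involutions :: "nat \<Rightarrow> (nat \<Rightarrow> nat) set" where
  "involutions n = {\<phi>. \<phi> permutes {1..n} \<and> \<phi> \<circ> \<phi> = id}"

definition contains_subseq :: "nat \<Rightarrow> (nat \<Rightarrow> nat) \<Rightarrow> nat \<Rightarrow> (nat \<Rightarrow> nat) \<Rightarrow> bool" where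
  "contains_subseq n \<phi> k \<sigma> \<longleftrightarrow>
     (\<exists>p :: nat \<Rightarrow> nat. (\<forall>i\<in>{1..k}. p i \<in> {1..n} \<and> \<phi> (p i) = \<sigma> i) \<and>
                        (\<forall>i\<in>{1..<k}. p i < p (Suc i)))"

end

theory Submission
  imports Defs
begin


definition cj :: "(nat \<Rightarrow> nat) \<Rightarrow> (nat \<Rightarrow> nat) \<Rightarrow> nat \<Rightarrow> nat" where
  "cj t f = t \<circ> f \<circ> inv t"

lemma inv_mem: "\<phi> \<in> involutions n \<longleftrightarrow> \<phi> permutes {1..n} \<and> (\<forall>x. \<phi> (\<phi> x) = x)"
  unfolding involutions_def by (auto simp: fun_eq_iff)

lemma finite_inv: "finite (involutions n)"
  by (rule finite_subset[OF _ finite_permutations[of "{1..n}"]]) (auto simp: involutions_def)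

lemma id_inv: "id \<in> involutions n"
  by (simp add: involutions_def permutes_id)

lemma card_inv_pos: "card (involutions n) > 0"
  using finite_inv id_inv by (metis card_gt_0_iff empty_iff)

lemma cj_inv:
  assumes t: "t permutes {1..n}" and f: "f \<in> involutions n"
  shows "cj t f \<in> involutions n"
proof -
  have "cj t f permutes {1..n}" unfolding cj_def
    using t f by (auto simp: involutions_def intro!: permutes_compose permutes_inv)
  moreover have "cj t f (cj t f x) = x" for x
    using f permutes_inverses[OF t] by (simp add: cj_def inv_mem)
  ultimately show ?thesis by (simp add: inv_mem)
qed

lemma cj_cj:
  assumes t: "t permutes {1..n}"
  shows "cj (inv t) (cj t f) = f"
proof -
  have "inv (inv t) = t" using t by (simp add: inv_inv_eq permutes_bij)
  then show ?thesis using permutes_inverses[OF t] by (simp add: cj_def fun_eq_iff)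
qed

lemma cj_apply:
  assumes t: "t permutes {1..n}"
  shows "cj t f (t x) = t (f x)"
  using permutes_inverses[OF t] by (simp add: cj_def)

lemma card_sym:
  assumes t: "t permutes {1..n}"
    and PQ: "\<And>f. f \<in> involutions n \<Longrightarrow> P f \<longleftrightarrow> Q (cj t f)"
  shows "card {f \<in> involutions n. Q f} = card {f \<in> involutions n. P f}"
proof -
  have ti: "inv t permutes {1..n}" using t by (rule permutes_inv)
  have "bij_betw (cj t) {f \<in> involutions n. P f} {f \<in> involutions n. Q f}"
  proof (rule bij_betw_byWitness[where f' = "cj (inv t)"])
    show "\<forall>a\<in>{f \<in> involutions n. P f}. cj (inv t) (cj t a) = a" using cj_cj[OF t] by simp
    show "\<forall>a'\<in>{f \<in> involutions n. Q f}. cj t (cj (inv t) a') = a'"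
      using cj_cj[OF ti] t by (simp add: inv_inv_eq permutes_bij)
    show "cj t ` {f \<in> involutions n. P f} \<subseteq> {f \<in> involutions n. Q f}"
      using cj_inv[OF t] PQ by auto
    show "cj (inv t) ` {f \<in> involutions n. Q f} \<subseteq> {f \<in> involutions n. P f}"
    proof safe
      fix f assume f: "f \<in> involutions n" "Q f"
      show "cj (inv t) f \<in> involutions n" using cj_inv[OF ti f(1)] .
      have "cj t (cj (inv t) f) = f" using cj_cj[OF ti] t by (simp add: inv_inv_eq permutes_bij)
      then show "P (cj (inv t) f)" using PQ[OF cj_inv[OF ti f(1)]] f by simp
    qed
  qed
  from bij_betw_same_card[OF this] show ?thesis by simp
qed




abbreviation I :: "nat \<Rightarrow> nat" where "I n \<equiv> card (involutions n)"

lemma card_move: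
  assumes t: "t permutes {1..n}"
  shows "card {f \<in> involutions n. f (t i) = t j} = card {f \<in> involutions n. f i = j}"
  by (rule card_sym[OF t]) (simp add: cj_apply[OF t] permutes_inj[OF t, THEN inj_eq])

lemma fix_last:
  assumes "n \<ge> 1"
  shows "{f \<in> involutions n. f n = n} = involutions (n - 1)"
proof safe
  fix f assume f: "f \<in> involutions n" "f n = n"
  have "f permutes {1..n-1}"
  proof (rule permutes_superset[of _ "{1..n}"])
    show "f permutes {1..n}" using f by (simp add: inv_mem)
    fix x assume "x \<in> {1..n} - {1..n-1}"
    then have "x = n" by auto
    then show "f x = x" using f by simp
  qed
  then show "f \<in> involutions (n - 1)" using f by (simp add: inv_mem)
next
  fix f assume f: "f \<in> involutions (n - 1)"
  then show "f \<in> involutions n" using assms permutes_subset[of f "{1..n-1}" "{1..n}"]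
    by (auto simp: inv_mem)
  show "f n = n" using f assms by (auto simp: inv_mem intro!: permutes_not_in)
qed

lemma card_fix:
  assumes "i \<in> {1..n}"
  shows "card {f \<in> involutions n. f i = i} = I (n - 1)"
proof -
  have t: "Transposition.transpose i n permutes {1..n}" using assms by (intro permutes_swap_id) auto
  have "card {f \<in> involutions n. f i = i} =
        card {f \<in> involutions n. f (Transposition.transpose i n i) = Transposition.transpose i n i}"
    using card_move[OF t, of i i] by simp
  also have "\<dots> = card {f \<in> involutions n. f n = n}" by simp
  also have "\<dots> = I (n - 1)" using assms fix_last by simp
  finally show ?thesis .
qed

lemma card_pair_last:
  assumes "n \<ge> 2"
  shows "card {f \<in> involutions n. f n = n - 1} = I (n - 2)"
proof -
  define T where "T = Transposition.transpose (n - 1) n"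
  have T: "T permutes {1..n}" unfolding T_def using assms by (intro permutes_swap_id) auto
  have TT: "T (T x) = x" for x by (simp add: T_def)
  have "bij_betw (\<lambda>f. T \<circ> f) (involutions (n - 2)) {f \<in> involutions n. f n = n - 1}"
  proof (rule bij_betw_byWitness[where f' = "\<lambda>f. T \<circ> f"])
    show "\<forall>a\<in>involutions (n - 2). T \<circ> (T \<circ> a) = a" by (simp add: fun_eq_iff TT)
    show "\<forall>a\<in>{f \<in> involutions n. f n = n - 1}. T \<circ> (T \<circ> a) = a" by (simp add: fun_eq_iff TT)
    show "(\<circ>) T ` involutions (n - 2) \<subseteq> {f \<in> involutions n. f n = n - 1}"
    proof safe
      fix g assume g: "g \<in> involutions (n - 2)"
      have gp: "g permutes {1..n}" using g permutes_subset[of g "{1..n-2}" "{1..n}"] by (auto simp: inv_mem)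
      have g1: "g (n - 1) = n - 1" "g n = n" using g assms by (auto simp: inv_mem intro!: permutes_not_in)
      have com: "g (T x) = T (g x)" for x
      proof (cases "x = n - 1 \<or> x = n")
        case True then show ?thesis using g1 by (auto simp: T_def)
      next
        case False
        have gg: "g (g y) = y" for y using g by (simp add: inv_mem)
        from False have "g x \<noteq> n - 1 \<and> g x \<noteq> n" using gg[of x] g1 by force
        then show ?thesis using False by (simp add: T_def)
      qed
      have "T \<circ> g permutes {1..n}" by (rule permutes_compose[OF gp T])
      moreover have "(T \<circ> g) ((T \<circ> g) x) = x" for x using g com TT by (simp add: inv_mem)
      ultimately show "T \<circ> g \<in> involutions n" by (simp add: inv_mem)
      show "(T \<circ> g) n = n - 1" using g1 by (simp add: T_def)
    qed
    show "(\<circ>) T ` {f \<in> involutions n. f n = n - 1} \<subseteq> involutions (n - 2)"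
    proof safe
      fix f assume f: "f \<in> involutions n" "f n = n - 1"
      have ff: "f (f y) = y" for y using f by (simp add: inv_mem)
      have f2: "f (n - 1) = n" using ff[of n] f by simp
      have com: "f (T x) = T (f x)" for x
      proof (cases "x = n - 1 \<or> x = n")
        case True then show ?thesis using f f2 by (auto simp: T_def)
      next
        case False
        from False have "f x \<noteq> n - 1 \<and> f x \<noteq> n" using ff[of x] f f2 by force
        then show ?thesis using False by (simp add: T_def)
      qed
      have p: "T \<circ> f permutes {1..n}" using f by (intro permutes_compose[OF _ T]) (simp add: inv_mem)
      have "T \<circ> f permutes {1..n-2}"
      proof (rule permutes_superset[OF p])
        fix x assume "x \<in> {1..n} - {1..n-2}"
        then have "x = n - 1 \<or> x = n" by auto
        then show "(T \<circ> f) x = x" using f f2 by (auto simp: T_def)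
      qed
      moreover have "(T \<circ> f) ((T \<circ> f) x) = x" for x using f com TT by (simp add: inv_mem)
      ultimately show "T \<circ> f \<in> involutions (n - 2)" by (simp add: inv_mem)
    qed
  qed
  from bij_betw_same_card[OF this] show ?thesis by simp
qed

lemma card_pair:
  assumes "i \<in> {1..n}" "j \<in> {1..n}" "i \<noteq> j"
  shows "card {f \<in> involutions n. f i = j} = I (n - 2)"
proof -
  have n2: "n \<ge> 2" using assms by auto
  have last: "card {f \<in> involutions n. f n = j'} = I (n - 2)" if "j' \<in> {1..n}" "j' \<noteq> n" for j'
  proof -
    have t: "Transposition.transpose j' (n - 1) permutes {1..n}" using that n2 by (intro permutes_swap_id) auto
    have "card {f \<in> involutions n. f n = j'} =
       card {f \<in> involutions n. f (Transposition.transpose j' (n - 1) n) = Transposition.transpose j' (n - 1) j'}"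
      using card_move[OF t, of n j'] by simp
    also have "Transposition.transpose j' (n - 1) n = n"
    proof -
      have "n - 1 \<noteq> n" using n2 by simp
      then show ?thesis using that by (simp add: transpose_def)
    qed
    also have "Transposition.transpose j' (n - 1) j' = n - 1" by simp
    finally show ?thesis using card_pair_last[OF n2] by simp
  qed
  have t: "Transposition.transpose i n permutes {1..n}" using assms by (intro permutes_swap_id) auto
  have "card {f \<in> involutions n. f i = j} =
      card {f \<in> involutions n. f (Transposition.transpose i n i) = Transposition.transpose i n j}"
    using card_move[OF t, of i j] by simp
  also have "\<dots> = card {f \<in> involutions n. f n = Transposition.transpose i n j}" by simp
  also have "\<dots> = I (n - 2)"
    using assms by (intro last) (auto simp: transpose_def)
  finally show ?thesis .
qed

lemma recur:
  assumes "n \<ge> 2"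
  shows "I n = I (n - 1) + (n - 1) * I (n - 2)"
proof -
  have eq: "involutions n = (\<Union>j\<in>{1..n}. {f \<in> involutions n. f n = j})"
  proof safe
    fix f assume "f \<in> involutions n"
    then have "f n \<in> {1..n}" using assms permutes_in_image[of f "{1..n}" n] by (auto simp: inv_mem)
    then show "f \<in> (\<Union>j\<in>{1..n}. {f \<in> involutions n. f n = j})" using \<open>f \<in> involutions n\<close> by blast
  qed
  have "I n = (\<Sum>j\<in>{1..n}. card {f \<in> involutions n. f n = j})"
    by (subst eq, rule card_UN_disjoint) (auto intro: finite_subset[OF _ finite_inv])
  also have "\<dots> = (\<Sum>j\<in>insert n {1..n-1}. card {f \<in> involutions n. f n = j})"
    using assms by (intro sum.cong) auto
  also have "\<dots> = I (n - 1) + (\<Sum>j\<in>{1..n-1}. card {f \<in> involutions n. f n = j})"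
    using assms card_fix[of n n] by (subst sum.insert) auto
  also have "(\<Sum>j\<in>{1..n-1}. card {f \<in> involutions n. f n = j}) = (\<Sum>j\<in>{1..n-1}. I (n - 2))"
    using assms by (intro sum.cong refl card_pair) auto
  finally show ?thesis by simp
qed




lemma I01: "I 1 = I 0"
proof -
  have "{f \<in> involutions 1. f 1 = 1} = involutions 0" using fix_last[of 1] by simp
  moreover have "{f \<in> involutions 1. f 1 = 1} = involutions 1"
    using permutes_in_image[of _ "{1..1}" 1] by (auto simp: inv_mem)
  ultimately show ?thesis by simp
qed

lemma sq_ineq:
  fixes t :: real assumes "t \<ge> 1"
  shows "(1 + ((t - 1)^2 + 1) / t)^2 \<ge> (t - 1)^2 + 2"
proof -
  have e: "1 + ((t - 1)^2 + 1) / t = t - 1 + 2 / t" using assms by (simp add: field_simps power2_eq_square)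
  have "(t - 1 + 2 / t)^2 = (t-1)^2 + 4 * (t - 1) / t + 4 / t^2"
    using assms by (simp add: field_simps power2_eq_square)
  moreover have "4 * (t - 1) / t + 4 / t^2 \<ge> 2"
  proof -
    have "4 * (t - 1) / t + 4 / t^2 - 2 = 2 * ((t - 1)^2 + 1) / t^2"
      using assms by (simp add: field_simps power2_eq_square)
    moreover have "2 * ((t - 1)^2 + 1) / t^2 \<ge> 0" by simp
    ultimately show ?thesis by linarith
  qed
  ultimately show ?thesis unfolding e by linarith
qed

definition xr :: "nat \<Rightarrow> real" where "xr m = real (I (Suc m)) / real (I m)"

lemma xr_rec: "xr (Suc m) = 1 + real (Suc m) / xr m"
proof -
  have r: "real (I (Suc (Suc m))) = real (I (Suc m)) + real (Suc m) * real (I m)"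
    using recur[of "Suc (Suc m)"] by (simp add: algebra_simps)
  have p: "real (I m) > 0" "real (I (Suc m)) > 0" using card_inv_pos by auto
  show ?thesis unfolding xr_def r using p by (simp add: field_simps)
qed

lemma xr_bounds: "xr m \<ge> 1 \<and> xr m \<le> 1 + sqrt m \<and> (xr m)^2 \<ge> m + 1"
proof (induction m)
  case 0
  then show ?case using I01 card_inv_pos[of 0] by (simp add: xr_def)
next
  case (Suc m)
  have x1: "xr m \<ge> 1" and xu: "xr m \<le> 1 + sqrt m" and xs: "(xr m)^2 \<ge> m + 1" using Suc by auto
  have sq: "sqrt (m + 1) \<le> xr m" using xs x1 by (intro real_le_lsqrt) auto
  have sp: "sqrt (real m + 1) > 0" by simp
  have A: "xr (Suc m) \<ge> 1" using x1 by (simp add: xr_rec)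
  have "real (Suc m) / xr m \<le> real (Suc m) / sqrt (m + 1)"
    using sq sp x1 by (intro divide_left_mono) auto
  also have "\<dots> = sqrt (real (Suc m))"
    using real_div_sqrt[of "real m + 1"] by (simp add: add.commute)
  finally have B: "xr (Suc m) \<le> 1 + sqrt (real (Suc m))" by (simp add: xr_rec)
  define t where "t = 1 + sqrt m"
  have t1: "t \<ge> 1" by (simp add: t_def)
  have mt: "real m = (t - 1)^2" by (simp add: t_def)
  have "1 + (real m + 1) / t \<le> xr (Suc m)"
    using xu x1 t1 unfolding xr_rec t_def[symmetric]
    by (auto intro!: divide_left_mono simp: add.commute)
  then have "(1 + (real m + 1) / t)^2 \<le> (xr (Suc m))^2"
    using t1 by (intro power_mono) (auto intro: add_nonneg_nonneg)
  moreover have "(1 + (real m + 1) / t)^2 \<ge> real m + 2" using sq_ineq[OF t1] mt by simp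
  ultimately have C: "(xr (Suc m))^2 \<ge> real (Suc m) + 1" by simp
  show ?case using A B C by simp
qed

lemma ratio1: "(\<lambda>n. real (I (n - 1)) / real (I n)) \<longlonglongrightarrow> 0"
proof (rule LIMSEQ_offset[where k = 1])
  have le: "real (I (n + 1 - 1)) / real (I (n + 1)) \<le> 1 / sqrt (real n + 1)" for n
  proof -
    have "real (I (n + 1 - 1)) / real (I (n + 1)) = 1 / xr n" by (simp add: xr_def)
    moreover have "sqrt (real n + 1) \<le> xr n" using xr_bounds[of n]
      by (intro real_le_lsqrt) auto
    ultimately show ?thesis by (simp add: frac_le)
  qed
  have "(\<lambda>n. 1 / sqrt (real n + 1)) \<longlonglongrightarrow> 0"
  proof -
    have "filterlim (\<lambda>n. real (Suc n)) at_top sequentially"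
      by (rule filterlim_compose[OF filterlim_real_sequentially filterlim_Suc])
    then have "filterlim (\<lambda>n. sqrt (real (Suc n))) at_top sequentially"
      by (rule filterlim_compose[OF sqrt_at_top])
    then have "filterlim (\<lambda>n. sqrt (real n + 1)) at_top sequentially" by (simp add: add.commute)
    then show ?thesis by (simp add: tendsto_divide_0[OF tendsto_const] filterlim_at_infinity_imp_filterlim_at_top filterlim_at_top_imp_at_infinity)
  qed
  then show "(\<lambda>n. real (I (n + 1 - 1)) / real (I (n + 1))) \<longlonglongrightarrow> 0"
    by (rule tendsto_sandwich[rotated 2, OF tendsto_const]) (use le in auto)
qed

lemma ratio2: "(\<lambda>n. real (I (n - 2)) / real (I n)) \<longlonglongrightarrow> 0"
proof (rule LIMSEQ_offset[where k = 2])
  have le: "real (I (n + 2 - 2)) / real (I (n + 2)) \<le> 1 / (real n + 1)" for n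
  proof -
    have r: "real (I (n + 2)) = real (I (n + 1)) + real (n + 1) * real (I n)"
      using recur[of "n + 2"] by (simp add: algebra_simps)
    have p: "real (I n) > 0" "real (I (Suc n)) > 0" using card_inv_pos by auto
    have "real (I n) * (real n + 1) \<le> real (I (n + 2))" using r p by (simp add: algebra_simps)
    moreover have "real (I (n + 2)) > 0" using card_inv_pos by simp
    ultimately show ?thesis by (simp add: divide_simps mult.commute)
  qed
  have "(\<lambda>n. 1 / (real n + 1)) \<longlonglongrightarrow> 0"
    using LIMSEQ_Suc[OF lim_inverse_n'] by (simp add: add.commute)
  then show "(\<lambda>n. real (I (n + 2 - 2)) / real (I (n + 2))) \<longlonglongrightarrow> 0"
    by (rule tendsto_sandwich[rotated 2, OF tendsto_const]) (use le in auto)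
qed




definition good :: "nat \<Rightarrow> (nat \<Rightarrow> nat) \<Rightarrow> bool" where
  "good k f \<longleftrightarrow> (\<forall>i\<in>{1..k}. k < f i)"

definition chain :: "nat \<Rightarrow> (nat \<Rightarrow> nat) \<Rightarrow> (nat \<Rightarrow> nat) \<Rightarrow> bool" where
  "chain k f r \<longleftrightarrow> (\<forall>i\<in>{1..<k}. f (r i) < f (r (Suc i)))"

lemma inv_facts:
  assumes "f \<in> involutions n"
  shows "f permutes {1..n}" "f (f x) = x" "x \<in> {1..n} \<Longrightarrow> f x \<in> {1..n}"
proof -
  show p: "f permutes {1..n}" using assms by (simp add: inv_mem)
  show "f (f x) = x" using assms by (simp add: inv_mem)
  show "x \<in> {1..n} \<Longrightarrow> f x \<in> {1..n}" using permutes_in_image[OF p] by simp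
qed

lemma contains_iff:
  assumes f: "f \<in> involutions n" and s: "\<sigma> permutes {1..k}" and kn: "k \<le> n"
  shows "contains_subseq n f k \<sigma> \<longleftrightarrow> chain k f \<sigma>"
proof
  assume "contains_subseq n f k \<sigma>"
  then obtain p where p: "\<forall>i\<in>{1..k}. p i \<in> {1..n} \<and> f (p i) = \<sigma> i" "\<forall>i\<in>{1..<k}. p i < p (Suc i)"
    unfolding contains_subseq_def by blast
  have pe: "p i = f (\<sigma> i)" if "i \<in> {1..k}" for i
  proof -
    have "f (p i) = \<sigma> i" using p(1) that by blast
    then show ?thesis using inv_facts(2)[OF f, of "p i"] by simp
  qed
  show "chain k f \<sigma>" unfolding chain_def
  proof
    fix i assume i: "i \<in> {1..<k}"
    then have i1: "i \<in> {1..k}" and i2: "Suc i \<in> {1..k}" by auto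
    have "p i < p (Suc i)" using p(2) i by blast
    then show "f (\<sigma> i) < f (\<sigma> (Suc i))" unfolding pe[OF i1] pe[OF i2] .
  qed
next
  assume c: "chain k f \<sigma>"
  have A: "\<forall>i\<in>{1..k}. f (\<sigma> i) \<in> {1..n} \<and> f (f (\<sigma> i)) = \<sigma> i"
  proof
    fix i assume i: "i \<in> {1..k}"
    then have "\<sigma> i \<in> {1..k}" using permutes_in_image[OF s] by blast
    then have "\<sigma> i \<in> {1..n}" using kn by simp
    then show "f (\<sigma> i) \<in> {1..n} \<and> f (f (\<sigma> i)) = \<sigma> i"
      using inv_facts(3)[OF f, of "\<sigma> i"] inv_facts(2)[OF f, of "\<sigma> i"] by blast
  qed
  have B: "\<forall>i\<in>{1..<k}. f (\<sigma> i) < f (\<sigma> (Suc i))" using c unfolding chain_def .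
  show "contains_subseq n f k \<sigma>" unfolding contains_subseq_def
    using A B by (intro exI[of _ "\<lambda>i. f (\<sigma> i)"]) simp
qed

lemma card_rho_eq:
  assumes r: "\<rho> permutes {1..k}" and s: "\<sigma> permutes {1..k}" and kn: "k \<le> n"
  shows "card {f \<in> involutions n. good k f \<and> chain k f \<sigma>} = card {f \<in> involutions n. good k f \<and> chain k f \<rho>}"
proof (rule card_sym)
  define a where "a = \<sigma> \<circ> inv \<rho>"
  have ak: "a permutes {1..k}" unfolding a_def using r s by (intro permutes_compose permutes_inv)
  show an: "a permutes {1..n}" using ak kn by (intro permutes_subset[OF ak]) auto
  have ar: "a (\<rho> i) = \<sigma> i" for i unfolding a_def using permutes_inverses[OF r] by simp
  have afix: "a x = x" if "k < x" for x using permutes_not_in[OF ak] that by auto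
  fix f assume f: "f \<in> involutions n"
  define g where "g = cj a f"
  have ga: "g (a x) = a (f x)" for x unfolding g_def by (rule cj_apply[OF an])
  have gf: "good k g" and ch: "chain k g \<sigma> \<longleftrightarrow> chain k f \<rho>" if gd: "good k f"
  proof -
    show "good k g" unfolding good_def
    proof
      fix i assume i: "i \<in> {1..k}"
      have ii: "inv a i \<in> {1..k}" using permutes_in_image[OF permutes_inv[OF ak]] i by auto
      have "g i = g (a (inv a i))" using permutes_inverses[OF ak] by simp
      also have "\<dots> = a (f (inv a i))" by (rule ga)
      also have "\<dots> = f (inv a i)" using gd ii by (intro afix) (auto simp: good_def)
      finally show "k < g i" using gd ii by (auto simp: good_def)
    qed
    have "g (\<sigma> i) = f (\<rho> i)" if "i \<in> {1..k}" for i
    proof -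
      have "\<rho> i \<in> {1..k}" using permutes_in_image[OF r] that by auto
      then have "k < f (\<rho> i)" using gd by (auto simp: good_def)
      then show ?thesis using ga[of "\<rho> i"] ar afix by simp
    qed
    then show "chain k g \<sigma> \<longleftrightarrow> chain k f \<rho>" unfolding chain_def by auto
  qed
  have bad: "\<not> good k g" if nb: "\<not> good k f"
  proof
    assume gg: "good k g"
    from nb obtain j where j: "j \<in> {1..k}" "\<not> k < f j" by (auto simp: good_def)
    have "f j \<in> {1..n}" using j kn inv_facts(3)[OF f] by auto
    then have fj: "f j \<in> {1..k}" using j by auto
    have "a j \<in> {1..k}" using permutes_in_image[OF ak] j by auto
    then have "k < g (a j)" using gg by (auto simp: good_def)
    moreover have "a (f j) \<in> {1..k}" using permutes_in_image[OF ak] fj by auto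
    ultimately show False using ga[of j] by auto
  qed
  show "good k f \<and> chain k f \<rho> \<longleftrightarrow> good k (cj a f) \<and> chain k (cj a f) \<sigma>"
    using gf ch bad unfolding g_def by blast
qed

lemma chain_mono:
  assumes "\<forall>i\<in>{1..<k}. h i < h (Suc i)" "1 \<le> a" "a \<le> b" "b \<le> k"
  shows "h a + (b - a) \<le> h b"
  using assms(3,4)
proof (induction b)
  case 0 then show ?case using assms(2) by simp
next
  case (Suc b)
  show ?case
  proof (cases "a = Suc b")
    case True then show ?thesis by simp
  next
    case False
    then have "a \<le> b" using Suc by simp
    then have "h a + (b - a) \<le> h b" using Suc by simp
    moreover have "h b < h (Suc b)" using assms(1) Suc \<open>a \<le> b\<close> assms(2) by auto
    ultimately show ?thesis using \<open>a \<le> b\<close> by simp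
  qed
qed

lemma perm_chain_id:
  assumes p: "\<pi> permutes {1..k}" and c: "\<forall>i\<in>{1..<k}. \<pi> i < \<pi> (Suc i)"
  shows "\<pi> x = x"
proof (cases "x \<in> {1..k}")
  case False then show ?thesis by (rule permutes_not_in[OF p])
next
  case True
  have "\<pi> 1 \<in> {1..k}" "\<pi> k \<in> {1..k}" using permutes_in_image[OF p, of 1] permutes_in_image[OF p, of k] True by auto
  then have p1: "\<pi> 1 \<ge> 1" "\<pi> k \<le> k" by auto
  have "\<pi> 1 + (x - 1) \<le> \<pi> x" using chain_mono[OF c, of 1 x] True by auto
  moreover have "\<pi> x + (k - x) \<le> \<pi> k" using chain_mono[OF c, of x k] True by auto
  ultimately show ?thesis using p1 True by auto
qed

lemma chain_unique:
  assumes r1: "r1 permutes {1..k}" and r2: "r2 permutes {1..k}"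
    and c1: "chain k f r1" and c2: "chain k f r2"
  shows "r1 = r2"
proof -
  define p where "p = inv r2 \<circ> r1"
  have pp: "p permutes {1..k}" unfolding p_def using r1 r2 by (intro permutes_compose permutes_inv)
  have r2p: "r2 (p x) = r1 x" for x unfolding p_def using permutes_inverses[OF r2] by simp
  have h2: "\<forall>i\<in>{1..<k}. (f \<circ> r2) i < (f \<circ> r2) (Suc i)" using c2 by (simp add: chain_def)
  have mono2: "f (r2 u) < f (r2 v)" if "1 \<le> u" "u < v" "v \<le> k" for u v
    using chain_mono[OF h2, of u v] that by auto
  have "\<forall>i\<in>{1..<k}. p i < p (Suc i)"
  proof
    fix i assume i: "i \<in> {1..<k}"
    have u: "p i \<in> {1..k}" "p (Suc i) \<in> {1..k}" using permutes_in_image[OF pp] i by auto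
    have lt: "f (r2 (p i)) < f (r2 (p (Suc i)))" using c1 i by (simp add: chain_def r2p)
    show "p i < p (Suc i)"
    proof (rule ccontr)
      assume "\<not> p i < p (Suc i)"
      then have "p (Suc i) < p i \<or> p (Suc i) = p i" by auto
      then show False using mono2[of "p (Suc i)" "p i"] u lt by auto
    qed
  qed
  then have "p x = x" for x using perm_chain_id[OF pp] by blast
  then show ?thesis using r2p by (auto simp: fun_eq_iff)
qed

lemma chain_exists:
  assumes f: "f \<in> involutions n" and kn: "k \<le> n" and g: "good k f"
  shows "\<exists>r. r permutes {1..k} \<and> chain k f r"
proof -
  have ff: "f (f x) = x" for x using inv_facts(2)[OF f] .
  have finj: "inj f" by (metis ff injI)
  obtain xs where xs: "sorted_wrt (<) xs" "set xs = f ` {1..k}"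
  proof (rule finite_set_strict_sorted[of "f ` {1..k}"])
    show "finite (f ` {1..k})" by simp
  qed blast
  have dxs: "distinct xs" using xs(1) by (simp add: strict_sorted_iff)
  have lxs: "length xs = k"
    using distinct_card[OF dxs] xs(2) card_image[OF inj_on_subset[OF finj]] by simp
  define r where "r i = (if i \<in> {1..k} then f (xs ! (i - 1)) else i)" for i
  have rin: "r i \<in> {1..k}" if "i \<in> {1..k}" for i
  proof -
    have "xs ! (i - 1) \<in> f ` {1..k}" using xs(2) lxs that nth_mem[of "i - 1" xs] by auto
    then show ?thesis using that ff by (auto simp: r_def)
  qed
  have rinj: "inj_on r {1..k}"
  proof
    fix i j assume ij: "i \<in> {1..k}" "j \<in> {1..k}" "r i = r j"
    then have "xs ! (i - 1) = xs ! (j - 1)" using finj by (auto simp: r_def inj_eq)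
    then have "i - 1 = j - 1" using nth_eq_iff_index_eq[OF dxs] lxs ij by auto
    then show "i = j" using ij by auto
  qed
  have "r ` {1..k} = {1..k}" using rin rinj by (intro endo_inj_surj) auto
  then have rp: "r permutes {1..k}"
    using rinj by (intro bij_imp_permutes) (auto simp: bij_betw_def r_def)
  have "chain k f r" unfolding chain_def
  proof
    fix i assume i: "i \<in> {1..<k}"
    have "f (r i) = xs ! (i - 1)" "f (r (Suc i)) = xs ! i" using i ff by (auto simp: r_def)
    then show "f (r i) < f (r (Suc i))" using sorted_wrt_nth_less[OF xs(1), of "i - 1" i] lxs i by auto
  qed
  then show ?thesis using rp by blast
qed




lemma card_G:
  assumes s: "\<sigma> permutes {1..k}" and kn: "k \<le> n"
  shows "card {f \<in> involutions n. good k f} = fact k * card {f \<in> involutions n. good k f \<and> chain k f \<sigma>}"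
proof -
  let ?P = "{r. r permutes {1..k}}"
  let ?A = "\<lambda>r. {f \<in> involutions n. good k f \<and> chain k f r}"
  have eq: "{f \<in> involutions n. good k f} = (\<Union>r\<in>?P. ?A r)"
  proof safe
    fix f assume "f \<in> involutions n" "good k f"
    then obtain r where "r permutes {1..k}" "chain k f r" using chain_exists kn by blast
    then show "f \<in> (\<Union>r\<in>?P. ?A r)" using \<open>f \<in> involutions n\<close> \<open>good k f\<close> by blast
  qed
  have fP: "finite ?P" by (rule finite_permutations) simp
  have "card {f \<in> involutions n. good k f} = (\<Sum>r\<in>?P. card (?A r))"
    unfolding eq
  proof (rule card_UN_disjoint[OF fP])
    show "\<forall>r\<in>?P. finite (?A r)"
    proof
      fix r have "?A r \<subseteq> involutions n" by (rule subsetI) simp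
      then show "finite (?A r)" by (rule finite_subset[OF _ finite_inv])
    qed
    show "\<forall>r\<in>?P. \<forall>r'\<in>?P. r \<noteq> r' \<longrightarrow> ?A r \<inter> ?A r' = {}"
    proof (intro ballI impI)
      fix r r' assume r: "r \<in> ?P" and r': "r' \<in> ?P" and ne: "r \<noteq> r'"
      show "?A r \<inter> ?A r' = {}"
      proof (rule ccontr)
        assume "?A r \<inter> ?A r' \<noteq> {}"
        then obtain f where "f \<in> ?A r" "f \<in> ?A r'" by blast
        then have c: "chain k f r" "chain k f r'" by simp_all
        have "r permutes {1..k}" "r' permutes {1..k}" using r r' by simp_all
        then have "r = r'" using chain_unique c by blast
        then show False using ne by simp
      qed
    qed
  qed
  also have "\<dots> = (\<Sum>r\<in>?P. card (?A \<sigma>))"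
  proof (rule sum.cong[OF refl])
    fix r assume "r \<in> ?P"
    then have r: "r permutes {1..k}" by simp
    show "card (?A r) = card (?A \<sigma>)" by (rule card_rho_eq[OF r s kn, symmetric])
  qed
  also have "\<dots> = fact k * card (?A \<sigma>)" using card_permutations[of "{1..k}" k] by simp
  finally show ?thesis .
qed

lemma card_split:
  "card {f \<in> involutions n. good k f} + card {f \<in> involutions n. \<not> good k f} = I n"
proof -
  have "involutions n = {f \<in> involutions n. good k f} \<union> {f \<in> involutions n. \<not> good k f}" by blast
  then show ?thesis
  proof -
    have f1: "finite {f \<in> involutions n. good k f}" by (rule finite_subset[OF _ finite_inv[of n]]) (rule subsetI, simp)
    have f2: "finite {f \<in> involutions n. \<not> good k f}" by (rule finite_subset[OF _ finite_inv[of n]]) (rule subsetI, simp)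
    have "card ({f \<in> involutions n. good k f} \<union> {f \<in> involutions n. \<not> good k f}) =
      card {f \<in> involutions n. good k f} + card {f \<in> involutions n. \<not> good k f}"
      by (rule card_Un_disjoint[OF f1 f2]) blast
    then show ?thesis using \<open>involutions n = _\<close> by simp
  qed
qed

lemma card_bad:
  assumes kn: "k \<le> n"
  shows "card {f \<in> involutions n. \<not> good k f} \<le> k * k * (I (n - 1) + I (n - 2))"
proof -
  let ?S = "\<lambda>i j. {f \<in> involutions n. f i = j}"
  have sub: "{f \<in> involutions n. \<not> good k f} \<subseteq> (\<Union>i\<in>{1..k}. \<Union>j\<in>{1..k}. ?S i j)"
  proof
    fix f assume "f \<in> {f \<in> involutions n. \<not> good k f}"
    then have f: "f \<in> involutions n" and ng: "\<not> good k f" by auto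
    from ng obtain i where i: "i \<in> {1..k}" "\<not> k < f i" by (auto simp: good_def)
    have "i \<in> {1..n}" using i kn by auto
    then have "f i \<in> {1..n}" by (rule inv_facts(3)[OF f])
    then have "f i \<in> {1..k}" using i by auto
    then show "f \<in> (\<Union>i\<in>{1..k}. \<Union>j\<in>{1..k}. ?S i j)" using i f by blast
  qed
  have each: "card (?S i j) \<le> I (n - 1) + I (n - 2)" if "i \<in> {1..k}" "j \<in> {1..k}" for i j
  proof (cases "i = j")
    case True
    then have "card (?S i j) = I (n - 1)" using card_fix[of i n] that kn by auto
    then show ?thesis by simp
  next
    case False
    then have "card (?S i j) = I (n - 2)" using card_pair[of i n j] that kn by auto
    then show ?thesis by simp
  qed
  have "card {f \<in> involutions n. \<not> good k f} \<le> card (\<Union>i\<in>{1..k}. \<Union>j\<in>{1..k}. ?S i j)"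
    by (rule card_mono[OF _ sub]) (auto intro: finite_subset[OF _ finite_inv])
  also have "\<dots> \<le> (\<Sum>i\<in>{1..k}. card (\<Union>j\<in>{1..k}. ?S i j))" by (rule card_UN_le) simp
  also have "\<dots> \<le> (\<Sum>i\<in>{1..k}. \<Sum>j\<in>{1..k}. card (?S i j))"
    by (rule sum_mono, rule card_UN_le) simp
  also have "\<dots> \<le> (\<Sum>i\<in>{1..k}. \<Sum>j\<in>{1..k}. I (n - 1) + I (n - 2))"
    by (intro sum_mono each)
  also have "\<dots> = k * k * (I (n - 1) + I (n - 2))" by simp
  finally show ?thesis .
qed

lemma card_C:
  assumes s: "\<sigma> permutes {1..k}" and kn: "k \<le> n"
  shows "card {f \<in> involutions n. good k f \<and> chain k f \<sigma>} \<le> card {\<phi> \<in> involutions n. contains_subseq n \<phi> k \<sigma>}"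
    and "card {\<phi> \<in> involutions n. contains_subseq n \<phi> k \<sigma>} \<le>
         card {f \<in> involutions n. good k f \<and> chain k f \<sigma>} + card {f \<in> involutions n. \<not> good k f}"
proof -
  have iff: "contains_subseq n f k \<sigma> \<longleftrightarrow> chain k f \<sigma>" if "f \<in> involutions n" for f
    using contains_iff[OF that s kn] .
  have fin: "finite {\<phi> \<in> involutions n. contains_subseq n \<phi> k \<sigma>}" using finite_inv by simp
  show "card {f \<in> involutions n. good k f \<and> chain k f \<sigma>} \<le> card {\<phi> \<in> involutions n. contains_subseq n \<phi> k \<sigma>}"
    by (rule card_mono[OF fin]) (use iff in blast)
  have "card {\<phi> \<in> involutions n. contains_subseq n \<phi> k \<sigma>} \<le>
     card ({f \<in> involutions n. good k f \<and> chain k f \<sigma>} \<union> {f \<in> involutions n. \<not> good k f})"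
    by (rule card_mono) (use iff finite_inv in auto)
  also have "\<dots> \<le> card {f \<in> involutions n. good k f \<and> chain k f \<sigma>} + card {f \<in> involutions n. \<not> good k f}"
    by (rule card_Un_le)
  finally show "card {\<phi> \<in> involutions n. contains_subseq n \<phi> k \<sigma>} \<le>
         card {f \<in> involutions n. good k f \<and> chain k f \<sigma>} + card {f \<in> involutions n. \<not> good k f}" .
qed

lemma real_bounds:
  fixes a b c N F e :: real
  assumes "F \<ge> 1" "N > 0" "F * a + b = N" "a \<le> c" "c \<le> a + b" "b / N \<le> e" "a \<ge> 0" "b \<ge> 0"
  shows "1 / F - e \<le> c / N" "c / N \<le> 1 / F + e"
proof -
  have a: "a = (N - b) / F" using assms(1,3) by (simp add: field_simps)
  have "a / N = 1 / F - (b / N) / F" using assms(1,2) a by (simp add: field_simps)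
  moreover have "(b / N) / F \<le> b / N" using assms(1,2,8) by (simp add: divide_le_eq mult_le_cancel_left1 divide_nonneg_nonneg)
  moreover have "a / N \<le> c / N" using assms(2,4) by (simp add: divide_right_mono)
  ultimately show "1 / F - e \<le> c / N" using assms(6) by linarith
  have "c / N \<le> (a + b) / N" using assms(2,5) by (simp add: divide_right_mono)
  also have "\<dots> = a / N + b / N" by (simp add: add_divide_distrib)
  also have "a / N \<le> 1 / F" using \<open>a / N = 1 / F - (b / N) / F\<close> assms(1,2,8) by simp
  finally show "c / N \<le> 1 / F + e" using assms(6) by linarith
qed

theorem lemma1:
  fixes \<sigma> :: "nat \<Rightarrow> nat" and k :: nat
  assumes "\<sigma> permutes {1..k}"
  shows "(\<lambda>n. real (card {\<phi> \<in> involutions n. contains_subseq n \<phi> k \<sigma>})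
              / real (card (involutions n)))
         \<longlonglongrightarrow> 1 / fact k"
proof -
  define e where "e n = real (k * k) * (real (I (n - 1)) / real (I n) + real (I (n - 2)) / real (I n))" for n
  have e0: "e \<longlonglongrightarrow> 0" unfolding e_def
    using tendsto_mult[OF tendsto_const tendsto_add[OF ratio1 ratio2], of "real (k * k)"] by simp
  have bnd: "1 / fact k - e n \<le> real (card {\<phi> \<in> involutions n. contains_subseq n \<phi> k \<sigma>}) / real (I n) \<and>
             real (card {\<phi> \<in> involutions n. contains_subseq n \<phi> k \<sigma>}) / real (I n) \<le> 1 / fact k + e n"
    if kn: "k \<le> n" for n
  proof -
    let ?a = "card {f \<in> involutions n. good k f \<and> chain k f \<sigma>}"
    let ?b = "card {f \<in> involutions n. \<not> good k f}"
    let ?c = "card {\<phi> \<in> involutions n. contains_subseq n \<phi> k \<sigma>}"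
    have N: "real (I n) > 0" using card_inv_pos by simp
    have "I n = fact k * ?a + ?b" using card_G[OF assms kn] card_split[of n k] by simp
    then have "real (I n) = real (fact k * ?a + ?b)" by (rule arg_cong)
    then have eq: "fact k * real ?a + real ?b = real (I n)"
      by (simp only: of_nat_add of_nat_mult of_nat_fact)
    have F: "(fact k :: real) \<ge> 1" by simp
    have "real ?b \<le> real (k * k * (I (n - 1) + I (n - 2)))"
      using card_bad[OF kn] by (simp only: of_nat_le_iff)
    also have "\<dots> = real (k * k) * (real (I (n - 1)) + real (I (n - 2)))" by (simp only: of_nat_mult of_nat_add)
    finally have "real ?b \<le> real (k * k) * (real (I (n - 1)) + real (I (n - 2)))" .
    then have le: "real ?b / real (I n) \<le> real (k * k) * (real (I (n - 1)) + real (I (n - 2))) / real (I n)"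
      using N by (rule divide_right_mono[OF _ less_imp_le])
    have "e n = real (k * k) * (real (I (n - 1)) + real (I (n - 2))) / real (I n)"
      using N unfolding e_def by (simp add: field_simps)
    with le have "real ?b / real (I n) \<le> e n" by simp
    then show ?thesis
      using real_bounds[OF F N eq] card_C[OF assms kn] by simp
  qed
  show ?thesis
  proof (rule tendsto_sandwich[where f = "\<lambda>n. 1 / fact k - e n" and h = "\<lambda>n. 1 / fact k + e n"])
    show "\<forall>\<^sub>F n in sequentially. 1 / fact k - e n \<le> real (card {\<phi> \<in> involutions n. contains_subseq n \<phi> k \<sigma>}) / real (I n)"
      by (rule eventually_mono[OF eventually_ge_at_top[of k]]) (use bnd in blast)
    show "\<forall>\<^sub>F n in sequentially. real (card {\<phi> \<in> involutions n. contains_subseq n \<phi> k \<sigma>}) / real (I n) \<le> 1 / fact k + e n"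
      by (rule eventually_mono[OF eventually_ge_at_top[of k]]) (use bnd in blast)
    show "(\<lambda>n. 1 / fact k - e n) \<longlonglongrightarrow> 1 / fact k" using tendsto_diff[OF tendsto_const e0] by simp
    show "(\<lambda>n. 1 / fact k + e n) \<longlonglongrightarrow> 1 / fact k" using tendsto_add[OF tendsto_const e0] by simp
  qed
qed


end
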